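(* Let $Y\in[M]$ be categorical and suppose the central subspace of $Y$ given $X$ exists, with dimension $d^*_{\rm CS}$ and basis matrix $B\in\mathbb{R}^{p\times d^*_{\rm CS}}$; take $R^*=B^\top X$. Under cross-entropy loss, $d^*(\mathcal{L})=d^*_{\rm CS}$.
   Context: $X\in\mathbb{R}^p$. A subspace $\mathcal{S}$ is a dimension-reduction subspace if $Y\perp\!\!\!\perp X\mid P_{\mathcal{S}}X$; the central subspace is their intersection, assumed itself to be one; $d^*_{\rm CS}$ is its dimension. Cross-entropy loss: $\ell(y,\hat y)=-e_y^\top\log\hat y=-\log\hat y_y$ for $\hat y$ in the probability simplex of $\mathbb{R}^M$. $R^*=B^\top X$ is zero-padded to $R\in\mathbb{R}^{d_{\max}}$; $\mathcal{G}$ = all measurable maps from $\mathbb{R}^{d_{\max}}$ to the simplex; $\mathcal{G}_d=\{g\in\mathcal{G}:g(r)=g(r')\text{ whenever } r_{[d]}=r'_{[d]}\}$; $\mathcal{L}_d=\min_{g\in\mathcal{G}_d}\mathbb{E}\,\ell(Y,g(R))$; $d^*(\mathcal{L})=\min\{0\le d\le d_{\max}:\mathcal{L}_d=\mathcal{L}_{d_{\max}}\}$. *)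

theory Defs
  imports "HOL-Probability.Probability"
begin

definition orth_proj :: "'a::euclidean_space set \<Rightarrow> 'a \<Rightarrow> 'a" where
  "orth_proj S x = (THE y. y \<in> S \<and> (\<forall>z\<in>S. orthogonal (x - y) z))"

definition cond_indep ::
  "'w measure \<Rightarrow> 'b measure \<Rightarrow> ('w \<Rightarrow> 'b) \<Rightarrow> 'c measure \<Rightarrow> ('w \<Rightarrow> 'c)
     \<Rightarrow> 'd measure \<Rightarrow> ('w \<Rightarrow> 'd) \<Rightarrow> bool" where
  "cond_indep M NY Y NX X NZ Z \<longleftrightarrow>
     (\<forall>A\<in>sets NY. \<forall>B\<in>sets NX.
        AE \<omega> in M.
          real_cond_exp M (vimage_algebra (space M) Z NZ)
              (indicator (Y -` A \<inter> X -` B \<inter> space M)) \<omega>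
        = real_cond_exp M (vimage_algebra (space M) Z NZ) (indicator (Y -` A \<inter> space M)) \<omega>
          * real_cond_exp M (vimage_algebra (space M) Z NZ) (indicator (X -` B \<inter> space M)) \<omega>)"

definition is_dr_subspace ::
  "'w measure \<Rightarrow> ('w \<Rightarrow> 'a::euclidean_space) \<Rightarrow> ('w \<Rightarrow> 'm) \<Rightarrow> 'a set \<Rightarrow> bool" where
  "is_dr_subspace M X Y S \<longleftrightarrow> subspace S \<and>
     cond_indep M (count_space UNIV) Y borel X borel (\<lambda>\<omega>. orth_proj S (X \<omega>))"

definition central_subspace ::
  "'w measure \<Rightarrow> ('w \<Rightarrow> 'a::euclidean_space) \<Rightarrow> ('w \<Rightarrow> 'm) \<Rightarrow> 'a set" where
  "central_subspace M X Y = \<Inter> {S. is_dr_subspace M X Y S}"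

(* probability simplex in R^M, classes indexed by the finite type 'm *)
definition prob_simplex :: "(real ^ 'm::finite) set" where
  "prob_simplex = {q. (\<forall>i. 0 \<le> q $ i) \<and> (\<Sum>i\<in>UNIV. q $ i) = 1}"

(* cross-entropy loss  -log yhat_y  (with -log 0 = +\<infinity>) *)
definition ce_loss :: "'m::finite \<Rightarrow> real ^ 'm \<Rightarrow> ennreal" where
  "ce_loss y yhat = (if 0 < yhat $ y then ennreal (- ln (yhat $ y)) else \<infinity>)"

(* R^{dmax}: functions on {..<dmax} (extensional) with the product Borel sigma-algebra *)
abbreviation Rspace :: "nat \<Rightarrow> (nat \<Rightarrow> real) measure" where
  "Rspace dmax \<equiv> PiM {..<dmax} (\<lambda>_. borel)"

definition Gall :: "nat \<Rightarrow> ((nat \<Rightarrow> real) \<Rightarrow> real ^ 'm::finite) set" where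
  "Gall dmax = {g. g \<in> Rspace dmax \<rightarrow>\<^sub>M borel \<and> (\<forall>r\<in>space (Rspace dmax). g r \<in> prob_simplex)}"

definition Gd :: "nat \<Rightarrow> nat \<Rightarrow> ((nat \<Rightarrow> real) \<Rightarrow> real ^ 'm::finite) set" where
  "Gd dmax d = {g \<in> Gall dmax. \<forall>r\<in>space (Rspace dmax). \<forall>r'\<in>space (Rspace dmax).
        (\<forall>i<d. r i = r' i) \<longrightarrow> g r = g r'}"

(* \<L>_d = min_{g \<in> \<G>_d} E l(Y, g(R))  (taken as an infimum; the loss is [0,\<infinity>]-valued) *)
definition Lrisk :: "'w measure \<Rightarrow> ('w \<Rightarrow> 'm::finite) \<Rightarrow> ('w \<Rightarrow> nat \<Rightarrow> real) \<Rightarrow> nat \<Rightarrow> nat \<Rightarrow> ennreal" where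
  "Lrisk M Y R dmax d = (INF g\<in>Gd dmax d. \<integral>\<^sup>+ \<omega>. ce_loss (Y \<omega>) (g (R \<omega>)) \<partial>M)"

definition d_star :: "'w measure \<Rightarrow> ('w \<Rightarrow> 'm::finite) \<Rightarrow> ('w \<Rightarrow> nat \<Rightarrow> real) \<Rightarrow> nat \<Rightarrow> nat" where
  "d_star M Y R dmax = (LEAST d. d \<le> dmax \<and> Lrisk M Y R dmax d = Lrisk M Y R dmax dmax)"

(* R = zero-padding of R^* = B^T X to length dmax; column i of B is b i *)
definition padded_R :: "('w \<Rightarrow> 'a::euclidean_space) \<Rightarrow> (nat \<Rightarrow> 'a) \<Rightarrow> nat \<Rightarrow> nat \<Rightarrow> 'w \<Rightarrow> nat \<Rightarrow> real" where
  "padded_R X b d dmax \<omega> = restrict (\<lambda>i. if i < d then b i \<bullet> X \<omega> else 0) {..<dmax}"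

end

theory Submission
  imports Defs
begin

definition lossf :: "real \<Rightarrow> ennreal" where
  "lossf t = (if 0 < t then ennreal (- ln t) else \<infinity>)"

definition CE :: "real^'m::finite \<Rightarrow> real^'m \<Rightarrow> ennreal" where
  "CE p q = (\<Sum>y\<in>UNIV. ennreal (p$y) * lossf (q$y))"

lemma ce_loss_lossf: "ce_loss y q = lossf (q$y)"
  by (simp add: ce_loss_def lossf_def)

lemma simplex_le1:
  assumes "q \<in> prob_simplex" shows "q$y \<le> 1" "0 \<le> q$y"
proof -
  have "q$y \<le> (\<Sum>i\<in>UNIV. q $ i)"
    using assms by (intro member_le_sum) (auto simp: prob_simplex_def)
  then show "q$y \<le> 1" using assms by (simp add: prob_simplex_def)
  show "0 \<le> q$y" using assms by (simp add: prob_simplex_def)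
qed

lemma sum_split_compl:
  fixes f :: "'a::finite \<Rightarrow> 'b::comm_monoid_add"
  shows "(\<Sum>y\<in>UNIV. f y) = (\<Sum>y\<in>P. f y) + (\<Sum>y\<in>-P. f y)"
proof -
  have "(\<Sum>y\<in>UNIV. f y) = (\<Sum>y\<in>P \<union> -P. f y)" by simp
  also have "\<dots> = (\<Sum>y\<in>P. f y) + (\<Sum>y\<in>-P. f y)" by (rule sum.union_disjoint) auto
  finally show ?thesis .
qed

lemma gibbs_real:
  fixes p q :: "real^'m::finite"
  assumes p: "p \<in> prob_simplex" and q: "q \<in> prob_simplex"
    and pos: "\<And>y. 0 < p$y \<Longrightarrow> 0 < q$y"
  shows "(\<Sum>y\<in>{y. 0 < p$y}. p$y * ln (q$y / p$y)) \<le> 0"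
    and "(\<Sum>y\<in>{y. 0 < p$y}. p$y * ln (q$y / p$y)) = 0 \<Longrightarrow> p = q"
proof -
  define P where "P = {y. 0 < p$y}"
  have p0: "\<And>y. 0 \<le> p$y" and q0: "\<And>y. 0 \<le> q$y" using p q by (auto simp: prob_simplex_def)
  have ps: "(\<Sum>y\<in>UNIV. p$y) = 1" and qs: "(\<Sum>y\<in>UNIV. q$y) = 1" using p q by (auto simp: prob_simplex_def)
  have pP: "(\<Sum>y\<in>P. p$y) = 1"
  proof -
    have "(\<Sum>y\<in>UNIV. p$y) = (\<Sum>y\<in>P. p$y) + (\<Sum>y\<in>-P. p$y)"
      by (rule sum_split_compl)
    moreover have "(\<Sum>y\<in>-P. p$y) = 0" using p0 by (intro sum.neutral) (auto simp: P_def less_le)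
    ultimately show ?thesis using ps by simp
  qed
  have qsplit: "(\<Sum>y\<in>UNIV. q$y) = (\<Sum>y\<in>P. q$y) + (\<Sum>y\<in>-P. q$y)"
    by (rule sum_split_compl)
  have qnP: "0 \<le> (\<Sum>y\<in>-P. q$y)" using q0 by (intro sum_nonneg) auto
  have trm: "p$y * ln (q$y / p$y) \<le> q$y - p$y" if "y \<in> P" for y
  proof -
    have py: "0 < p$y" using that by (simp add: P_def)
    have "ln (q$y / p$y) \<le> q$y / p$y - 1" using pos[OF py] py by (intro ln_le_minus_one) simp
    then have "p$y * ln (q$y / p$y) \<le> p$y * (q$y / p$y - 1)" using py by (simp add: mult_left_mono)
    also have "\<dots> = q$y - p$y" using py by (simp add: field_simps)
    finally show ?thesis .
  qed
  have le1: "(\<Sum>y\<in>P. p$y * ln (q$y / p$y)) \<le> (\<Sum>y\<in>P. q$y - p$y)"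
    by (intro sum_mono trm)
  have le2: "(\<Sum>y\<in>P. q$y - p$y) \<le> 0"
    using pP qs qsplit qnP by (simp add: sum_subtractf)
  show "(\<Sum>y\<in>{y. 0 < p$y}. p$y * ln (q$y / p$y)) \<le> 0" using le1 le2 by (simp add: P_def)
  assume eq: "(\<Sum>y\<in>{y. 0 < p$y}. p$y * ln (q$y / p$y)) = 0"
  then have eq': "(\<Sum>y\<in>P. p$y * ln (q$y / p$y)) = 0" by (simp add: P_def)
  have s0: "(\<Sum>y\<in>P. (q$y - p$y) - p$y * ln (q$y / p$y)) = (\<Sum>y\<in>P. q$y - p$y)"
    using eq' by (simp add: sum_subtractf)
  have sP: "(\<Sum>y\<in>P. q$y - p$y) = 0" using le1 le2 eq' by simp
  have each: "\<forall>y\<in>P. (q$y - p$y) - p$y * ln (q$y / p$y) = 0"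
    using sum_nonneg_eq_0_iff[of P "\<lambda>y. (q$y - p$y) - p$y * ln (q$y / p$y)"] s0 sP trm by auto
  have onP: "q$y = p$y" if "y \<in> P" for y
  proof -
    have py: "0 < p$y" using that by (simp add: P_def)
    have e1: "q$y - p$y = p$y * ln (q$y / p$y)" using each that by simp
    have "p$y * (q$y / p$y - 1) = q$y - p$y" using py by (simp add: field_simps)
    then have "p$y * ln (q$y / p$y) = p$y * (q$y / p$y - 1)" using e1 by linarith
    then have "ln (q$y / p$y) = q$y / p$y - 1" using py by simp
    then have "q$y / p$y = 1" using pos[OF py] py by (intro ln_eq_minus_one) auto
    then show ?thesis using py by simp
  qed
  have "(\<Sum>y\<in>P. q$y) = 1" using sP pP by (simp add: sum_subtractf)
  then have "(\<Sum>y\<in>-P. q$y) = 0" using qsplit qs by simp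
  then have offP: "\<forall>y\<in>-P. q$y = 0" using sum_nonneg_eq_0_iff[of "-P" "\<lambda>y. q$y"] q0 by auto
  show "p = q"
  proof (rule vec_eq_iff[THEN iffD2], intro allI)
    fix y show "p$y = q$y"
    proof (cases "y \<in> P")
      case True then show ?thesis using onP by simp
    next
      case False then show ?thesis using offP p0[of y] by (auto simp: P_def)
    qed
  qed
qed

lemma CE_real:
  fixes p q :: "real^'m::finite"
  assumes p: "p \<in> prob_simplex" and q: "q \<in> prob_simplex"
    and pos: "\<And>y. 0 < p$y \<Longrightarrow> 0 < q$y"
  shows "CE p q = ennreal (\<Sum>y\<in>{y. 0 < p$y}. p$y * - ln (q$y))"
proof -
  have p0: "\<And>y. 0 \<le> p$y" using p by (auto simp: prob_simplex_def)
  have "CE p q = (\<Sum>y\<in>UNIV. ennreal (if 0 < p$y then p$y * - ln (q$y) else 0))"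
    unfolding CE_def
  proof (rule sum.cong[OF refl])
    fix y
    show "ennreal (p$y) * lossf (q$y) = ennreal (if 0 < p$y then p$y * - ln (q$y) else 0)"
    proof (cases "0 < p$y")
      case True
      then have "0 < q$y" by (rule pos)
      moreover have "q$y \<le> 1" using q by (rule simplex_le1)
      ultimately have "0 \<le> - ln (q$y)" by simp
      then show ?thesis using True \<open>0 < q$y\<close> ennreal_mult[of "p$y" "- ln (q$y)"] by (simp add: lossf_def)
    next
      case False then have "p$y = 0" using p0[of y] by simp
      then show ?thesis by simp
    qed
  qed
  also have "\<dots> = ennreal (\<Sum>y\<in>UNIV. (if 0 < p$y then p$y * - ln (q$y) else 0))"
  proof (rule sum_ennreal)
    fix y show "0 \<le> (if 0 < p$y then p$y * - ln (q$y) else 0)"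
    proof (cases "0 < p$y")
      case True
      then have "0 < q$y" by (rule pos)
      moreover have "q$y \<le> 1" using q by (rule simplex_le1)
      ultimately have "0 \<le> - ln (q$y)" by simp
      then show ?thesis using True by (simp add: mult_nonneg_nonpos)
    qed simp
  qed
  also have "(\<Sum>y\<in>UNIV. (if 0 < p$y then p$y * - ln (q$y) else 0)) = (\<Sum>y\<in>{y. 0 < p$y}. p$y * - ln (q$y))"
    by (simp add: sum.If_cases)
  finally show ?thesis .
qed

lemma CE_top:
  fixes p q :: "real^'m::finite"
  assumes "0 < p$y" "\<not> 0 < q$y"
  shows "CE p q = \<infinity>"
proof -
  have "lossf (q$y) = \<infinity>" using assms by (simp add: lossf_def)
  then have "ennreal (p$y) * lossf (q$y) = \<infinity>" using assms by (simp add: ennreal_mult_top)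
  have "ennreal (p$y) * lossf (q$y) \<le> CE p q"
    unfolding CE_def by (intro member_le_sum) auto
  then show ?thesis using \<open>ennreal (p$y) * lossf (q$y) = \<infinity>\<close> by (simp add: top_unique)
qed

lemma CE_diff:
  fixes p q :: "real^'m::finite"
  assumes p: "p \<in> prob_simplex" and pos: "\<And>y. 0 < p$y \<Longrightarrow> 0 < q$y"
  shows "(\<Sum>y\<in>{y. 0 < p$y}. p$y * - ln (q$y)) - (\<Sum>y\<in>{y. 0 < p$y}. p$y * - ln (p$y))
       = - (\<Sum>y\<in>{y. 0 < p$y}. p$y * ln (q$y / p$y))"
proof -
  have "p$y * - ln (q$y) - p$y * - ln (p$y) = - (p$y * ln (q$y / p$y))" if "y \<in> {y. 0 < p$y}" for y
  proof -
    have py: "0 < p$y" using that by simp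
    have "ln (q$y / p$y) = ln (q$y) - ln (p$y)" using py pos[OF py] by (simp add: ln_div)
    then show ?thesis by (simp add: algebra_simps flip: distrib_left)
  qed
  then show ?thesis by (simp add: sum_subtractf[symmetric] sum_negf[symmetric])
qed

lemma CE_G1:
  fixes p q :: "real^'m::finite"
  assumes p: "p \<in> prob_simplex" and q: "q \<in> prob_simplex"
  shows "CE p p \<le> CE p q"
proof (cases "\<forall>y. 0 < p$y \<longrightarrow> 0 < q$y")
  case True
  have "CE p q = ennreal (\<Sum>y\<in>{y. 0 < p$y}. p$y * - ln (q$y))" using True by (intro CE_real p q) auto
  moreover have "CE p p = ennreal (\<Sum>y\<in>{y. 0 < p$y}. p$y * - ln (p$y))" by (intro CE_real p) auto
  moreover have "(\<Sum>y\<in>{y. 0 < p$y}. p$y * ln (q$y / p$y)) \<le> 0" using True by (intro gibbs_real p q) auto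
  moreover note CE_diff[OF p, of q] True
  ultimately show ?thesis by (simp add: ennreal_leI)
next
  case False
  then obtain y where "0 < p$y" "\<not> 0 < q$y" by auto
  then show ?thesis by (simp add: CE_top)
qed

lemma CE_G2:
  fixes p q :: "real^'m::finite"
  assumes p: "p \<in> prob_simplex" and q: "q \<in> prob_simplex" and le: "CE p q \<le> CE p p"
  shows "p = q"
proof -
  have pp: "CE p p = ennreal (\<Sum>y\<in>{y. 0 < p$y}. p$y * - ln (p$y))" by (intro CE_real p) auto
  have True: "\<forall>y. 0 < p$y \<longrightarrow> 0 < q$y"
  proof (rule ccontr)
    assume "\<not> ?thesis"
    then obtain y where "0 < p$y" "\<not> 0 < q$y" by auto
    then have "CE p q = \<infinity>" by (simp add: CE_top)
    then show False using le pp by (simp add: top_unique)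
  qed
  have pq: "CE p q = ennreal (\<Sum>y\<in>{y. 0 < p$y}. p$y * - ln (q$y))" using True by (intro CE_real p q) auto
  have nn: "0 \<le> (\<Sum>y\<in>{y. 0 < p$y}. p$y * - ln (p$y))"
  proof (rule sum_nonneg)
    fix y assume "y \<in> {y. 0 < p$y}"
    then have "0 < p$y" "p$y \<le> 1" using simplex_le1[OF p] by auto
    then have "ln (p$y) \<le> 0" by simp
    then show "0 \<le> p$y * - ln (p$y)" using \<open>0 < p$y\<close> by (simp add: mult_nonneg_nonpos)
  qed
  have "(\<Sum>y\<in>{y. 0 < p$y}. p$y * - ln (q$y)) \<le> (\<Sum>y\<in>{y. 0 < p$y}. p$y * - ln (p$y))"
    using le pp pq nn by (simp add: ennreal_le_iff)
  moreover have "(\<Sum>y\<in>{y. 0 < p$y}. p$y * ln (q$y / p$y)) \<le> 0" using True by (intro gibbs_real p q) auto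
  moreover note CE_diff[OF p, of q] True
  ultimately have "(\<Sum>y\<in>{y. 0 < p$y}. p$y * ln (q$y / p$y)) = 0" by simp
  then show "p = q" using True by (intro gibbs_real(2)[OF p q]) auto
qed

lemma CE_bound:
  fixes p :: "real^'m::finite"
  assumes p: "p \<in> prob_simplex"
  shows "CE p p \<le> of_nat CARD('m)"
proof -
  have "CE p p = ennreal (\<Sum>y\<in>{y. 0 < p$y}. p$y * - ln (p$y))" by (intro CE_real p) auto
  also have "(\<Sum>y\<in>{y. 0 < p$y}. p$y * - ln (p$y)) \<le> (\<Sum>y\<in>{y. 0 < p$y}. 1)"
  proof (rule sum_mono)
    fix y assume "y \<in> {y. 0 < p$y}"
    then have py: "0 < p$y" by simp
    have "ln (1 / p$y) \<le> 1 / p$y - 1" using py by (intro ln_le_minus_one) simp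
    then have "- ln (p$y) \<le> 1 / p$y" using py by (simp add: ln_div)
    then have "p$y * - ln (p$y) \<le> p$y * (1 / p$y)" using py by (intro mult_left_mono) auto
    then show "p$y * - ln (p$y) \<le> 1" using py by simp
  qed
  also have "(\<Sum>y\<in>{y. 0 < p$y}. (1::real)) \<le> real CARD('m)"
    by (simp add: card_mono)
  finally show ?thesis by (simp add: ennreal_of_nat_eq_real_of_nat ennreal_leI)
qed

lemma orth_unique_aux:
  fixes S :: "'a::euclidean_space set"
  assumes S: "subspace S" and y1: "y1 \<in> S" "\<forall>z\<in>S. orthogonal (x - y1) z"
    and y2: "y2 \<in> S" "\<forall>z\<in>S. orthogonal (x - y2) z"
  shows "y1 = y2"
proof -
  have d: "y2 - y1 \<in> S" using S y1 y2 by (simp add: subspace_diff)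
  have "orthogonal (x - y1) (y2 - y1)" "orthogonal (x - y2) (y2 - y1)" using y1 y2 d by auto
  then have "(y2 - y1) \<bullet> (y2 - y1) = 0"
    unfolding orthogonal_def by (simp add: algebra_simps inner_diff_left inner_diff_right)
  then show ?thesis by simp
qed

lemma onb_proj_props:
  fixes S :: "'a::euclidean_space set"
  assumes S: "subspace S" and B: "B \<subseteq> S" "pairwise orthogonal B" "\<And>x. x \<in> B \<Longrightarrow> norm x = 1"
    "finite B" "span B = S"
  shows "(\<Sum>e\<in>B. (e \<bullet> x) *\<^sub>R e) \<in> S"
    and "\<forall>z\<in>S. orthogonal (x - (\<Sum>e\<in>B. (e \<bullet> x) *\<^sub>R e)) z"
proof -
  show "(\<Sum>e\<in>B. (e \<bullet> x) *\<^sub>R e) \<in> S"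
    using B S by (intro subspace_sum subspace_scale) auto
  show "\<forall>z\<in>S. orthogonal (x - (\<Sum>e\<in>B. (e \<bullet> x) *\<^sub>R e)) z"
  proof
    fix z assume "z \<in> S"
    then have z: "z \<in> span B" using B by simp
    show "orthogonal (x - (\<Sum>e\<in>B. (e \<bullet> x) *\<^sub>R e)) z"
    proof (rule orthogonal_to_span[OF z])
      fix e' assume e': "e' \<in> B"
      have "(\<Sum>e\<in>B. (e \<bullet> x) *\<^sub>R e) \<bullet> e' = (\<Sum>e\<in>B. (e \<bullet> x) * (e \<bullet> e'))"
        by (simp add: inner_sum_left)
      also have "\<dots> = (\<Sum>e\<in>B. if e = e' then e' \<bullet> x else 0)"
      proof (rule sum.cong[OF refl])
        fix e assume e: "e \<in> B"
        show "(e \<bullet> x) * (e \<bullet> e') = (if e = e' then e' \<bullet> x else 0)"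
        proof (cases "e = e'")
          case True
          have "e' \<bullet> e' = 1" using B(3)[OF e'] by (simp add: norm_eq_1)
          then show ?thesis using True by simp
        next
          case False
          then have "orthogonal e e'" using B(2) e e' by (auto simp: pairwise_def)
          then show ?thesis using False by (simp add: orthogonal_def)
        qed
      qed
      also have "\<dots> = e' \<bullet> x" using e' B(4) by simp
      finally show "orthogonal (x - (\<Sum>e\<in>B. (e \<bullet> x) *\<^sub>R e)) e'"
        unfolding orthogonal_def by (simp add: inner_diff_left inner_diff_right inner_commute)
    qed
  qed
qed

lemma orth_proj_formula:
  fixes S :: "'a::euclidean_space set"
  assumes S: "subspace S" and B: "B \<subseteq> S" "pairwise orthogonal B" "\<And>x. x \<in> B \<Longrightarrow> norm x = 1"
    "finite B" "span B = S"
  shows "orth_proj S x = (\<Sum>e\<in>B. (e \<bullet> x) *\<^sub>R e)"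
  unfolding orth_proj_def
proof (rule the_equality)
  show "(\<Sum>e\<in>B. (e \<bullet> x) *\<^sub>R e) \<in> S \<and> (\<forall>z\<in>S. orthogonal (x - (\<Sum>e\<in>B. (e \<bullet> x) *\<^sub>R e)) z)"
    using onb_proj_props[OF assms] by blast
  fix y assume "y \<in> S \<and> (\<forall>z\<in>S. orthogonal (x - y) z)"
  then show "y = (\<Sum>e\<in>B. (e \<bullet> x) *\<^sub>R e)"
    using onb_proj_props[OF assms] orth_unique_aux[OF S] by blast
qed

lemma onb_exists:
  fixes S :: "'a::euclidean_space set"
  assumes "subspace S"
  obtains B where "B \<subseteq> S" "pairwise orthogonal B" "\<And>x. x \<in> B \<Longrightarrow> norm x = 1"
    "finite B" "span B = S"
  using orthonormal_basis_subspace[OF assms] independent_imp_finite by metis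

lemma orth_proj_char:
  fixes S :: "'a::euclidean_space set"
  assumes S: "subspace S"
  shows "orth_proj S x \<in> S" "\<forall>z\<in>S. orthogonal (x - orth_proj S x) z"
proof -
  obtain B where B: "B \<subseteq> S" "pairwise orthogonal B" "\<And>x. x \<in> B \<Longrightarrow> norm x = 1"
    "finite B" "span B = S" using onb_exists[OF S] by blast
  show "orth_proj S x \<in> S" "\<forall>z\<in>S. orthogonal (x - orth_proj S x) z"
    using onb_proj_props[OF S B] orth_proj_formula[OF S B] by auto
qed

lemma orth_proj_unique:
  fixes S :: "'a::euclidean_space set"
  assumes S: "subspace S" and "y \<in> S" "\<forall>z\<in>S. orthogonal (x - y) z"
  shows "orth_proj S x = y"
  using orth_unique_aux[OF S _ _ assms(2,3)] orth_proj_char[OF S] by blast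

lemma orth_proj_inner:
  fixes S :: "'a::euclidean_space set"
  assumes S: "subspace S" and z: "z \<in> S"
  shows "z \<bullet> orth_proj S x = z \<bullet> x"
proof -
  have "orthogonal (x - orth_proj S x) z" using orth_proj_char(2)[OF S] z by blast
  then show ?thesis by (simp add: orthogonal_def inner_diff_left inner_diff_right inner_commute)
qed

lemma orth_proj_meas:
  fixes S :: "'a::euclidean_space set"
  assumes S: "subspace S"
  shows "orth_proj S \<in> borel_measurable borel"
proof -
  obtain B where B: "B \<subseteq> S" "pairwise orthogonal B" "\<And>x. x \<in> B \<Longrightarrow> norm x = 1"
    "finite B" "span B = S" using onb_exists[OF S] by blast
  have "orth_proj S = (\<lambda>x. \<Sum>e\<in>B. (e \<bullet> x) *\<^sub>R e)"
    using orth_proj_formula[OF S B] by auto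
  moreover have "(\<lambda>x. \<Sum>e\<in>B. (e \<bullet> x) *\<^sub>R e) \<in> borel_measurable borel"
    by measurable
  ultimately show ?thesis by simp
qed

lemma orth_proj_nested:
  fixes S T :: "'a::euclidean_space set"
  assumes S: "subspace S" and T: "subspace T" and ST: "S \<subseteq> T"
  shows "orth_proj S (orth_proj T x) = orth_proj S x"
proof (rule orth_proj_unique[OF S])
  show "orth_proj S x \<in> S" by (rule orth_proj_char[OF S])
  show "\<forall>z\<in>S. orthogonal (orth_proj T x - orth_proj S x) z"
  proof
    fix z assume z: "z \<in> S"
    have "orthogonal (x - orth_proj S x) z" using orth_proj_char(2)[OF S] z by blast
    moreover have "orthogonal (x - orth_proj T x) z" using orth_proj_char(2)[OF T] z ST by blast
    ultimately show "orthogonal (orth_proj T x - orth_proj S x) z"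
      by (simp add: orthogonal_def inner_diff_left)
  qed
qed

lemma proj_factor:
  fixes b :: "nat \<Rightarrow> 'a::euclidean_space" and C :: "'a set"
  assumes C: "subspace C" and sp: "span (b ` {..<d}) = C" and inj: "inj_on b {..<d}"
    and dd: "d \<le> dmax"
  obtains L where "L \<in> borel_measurable (PiM {..<dmax} (\<lambda>_. borel))"
    "\<And>x r. (\<forall>i<d. r i = b i \<bullet> x) \<Longrightarrow> L r = orth_proj C x"
proof -
  obtain B where B: "B \<subseteq> C" "pairwise orthogonal B" "\<And>x. x \<in> B \<Longrightarrow> norm x = 1"
    "finite B" "span B = C" using onb_exists[OF C] by blast
  have "\<forall>e\<in>B. \<exists>u. e = (\<Sum>v\<in>b ` {..<d}. u v *\<^sub>R v)"
  proof
    fix e assume "e \<in> B"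
    then have "e \<in> span (b ` {..<d})" using B sp by auto
    then show "\<exists>u. e = (\<Sum>v\<in>b ` {..<d}. u v *\<^sub>R v)"
      using span_finite[of "b ` {..<d}"] by auto
  qed
  then obtain u where u: "\<And>e. e \<in> B \<Longrightarrow> e = (\<Sum>v\<in>b ` {..<d}. u e v *\<^sub>R v)"
    by metis
  define L where "L r = (\<Sum>e\<in>B. (\<Sum>i<d. u e (b i) * r i) *\<^sub>R e)" for r :: "nat \<Rightarrow> real"
  have "L \<in> borel_measurable (PiM {..<dmax} (\<lambda>_. borel))"
    unfolding L_def
  proof (intro borel_measurable_sum borel_measurable_scaleR borel_measurable_const borel_measurable_times)
    fix e i assume "i \<in> {..<d}"
    then have "i \<in> {..<dmax}" using dd by auto
    then show "(\<lambda>x. x i) \<in> borel_measurable (PiM {..<dmax} (\<lambda>_. borel))"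
      by (rule measurable_component_singleton)
  qed
  moreover have "L r = orth_proj C x" if r: "\<forall>i<d. r i = b i \<bullet> x" for x r
  proof -
    have "e \<bullet> x = (\<Sum>i<d. u e (b i) * r i)" if e: "e \<in> B" for e
    proof -
      have "e \<bullet> x = (\<Sum>v\<in>b ` {..<d}. u e v * (v \<bullet> x))"
        by (subst u[OF e]) (simp add: inner_sum_left)
      also have "\<dots> = (\<Sum>i<d. u e (b i) * (b i \<bullet> x))"
        by (simp add: sum.reindex[OF inj])
      also have "\<dots> = (\<Sum>i<d. u e (b i) * r i)" using r by simp
      finally show ?thesis .
    qed
    then show ?thesis unfolding L_def using orth_proj_formula[OF C B] by simp
  qed
  ultimately show ?thesis using that by blast
qed

lemma doob_dynkin_ennreal:
  fixes f :: "'w \<Rightarrow> ennreal"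
  assumes f: "f \<in> borel_measurable (vimage_algebra \<Omega> T N)" and T: "T \<in> \<Omega> \<rightarrow> space N"
  obtains \<phi> where "\<phi> \<in> borel_measurable N" "\<forall>\<omega>\<in>\<Omega>. f \<omega> = \<phi> (T \<omega>)"
proof -
  obtain u where u: "\<And>i. simple_function (vimage_algebra \<Omega> T N) (u i)" "incseq u"
    "\<And>i x. u i x < top" "\<And>x. (SUP i. u i x) = f x"
    using borel_measurable_implies_simple_function_sequence'[OF f] by blast
  have fin: "finite (u i ` \<Omega>)" for i
    using simple_functionD(1)[OF u(1)[of i]] by simp
  have "\<exists>A. A \<in> sets N \<and> u i -` {v} \<inter> \<Omega> = T -` A \<inter> \<Omega>" for i v
  proof -
    have "u i -` {v} \<inter> space (vimage_algebra \<Omega> T N) \<in> sets (vimage_algebra \<Omega> T N)"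
      using u(1)[of i] by (rule simple_functionD(2))
    then show ?thesis unfolding sets_vimage_algebra2[OF T] by auto
  qed
  then obtain A where A: "\<And>i v. A i v \<in> sets N" "\<And>i v. u i -` {v} \<inter> \<Omega> = T -` (A i v) \<inter> \<Omega>"
    by metis
  define \<psi> where "\<psi> i x = (\<Sum>v\<in>u i ` \<Omega>. v * indicator (A i v) x)" for i x
  define \<phi> where "\<phi> x = (SUP i. \<psi> i x)" for x
  have "\<phi> \<in> borel_measurable N"
    unfolding \<phi>_def \<psi>_def using A(1) by measurable
  moreover have "f \<omega> = \<phi> (T \<omega>)" if \<omega>: "\<omega> \<in> \<Omega>" for \<omega>
  proof -
    have "\<psi> i (T \<omega>) = u i \<omega>" for i
    proof -
      have "\<psi> i (T \<omega>) = (\<Sum>v\<in>u i ` \<Omega>. if u i \<omega> = v then v else 0)"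
        unfolding \<psi>_def
      proof (rule sum.cong[OF refl])
        fix v
        have "(T \<omega> \<in> A i v) = (\<omega> \<in> T -` (A i v) \<inter> \<Omega>)" using \<omega> by simp
        also have "\<dots> = (\<omega> \<in> u i -` {v} \<inter> \<Omega>)" using A(2) by simp
        also have "\<dots> = (u i \<omega> = v)" using \<omega> by simp
        finally show "v * indicator (A i v) (T \<omega>) = (if u i \<omega> = v then v else 0)"
          by (auto simp: indicator_def)
      qed
      also have "\<dots> = u i \<omega>" using fin[of i] \<omega> by (simp add: sum.delta)
      finally show ?thesis .
    qed
    then show ?thesis unfolding \<phi>_def using u(4) by simp
  qed
  ultimately show ?thesis using that by blast
qed

lemma measurable_vec_nth [measurable]:
  fixes f :: "'w \<Rightarrow> real^'n"
  assumes "f \<in> borel_measurable M"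
  shows "(\<lambda>x. f x $ i) \<in> borel_measurable M"
  using borel_measurable_continuous_on[OF continuous_on_component[OF continuous_on_id] assms] by simp

lemma measurable_vec_lambda [measurable]:
  fixes f :: "'n::finite \<Rightarrow> 'w \<Rightarrow> real"
  assumes "\<And>i. f i \<in> borel_measurable M"
  shows "(\<lambda>x. \<chi> i. f i x) \<in> borel_measurable M"
proof (subst borel_measurable_euclidean_space, intro ballI)
  fix j :: "real^'n" assume "j \<in> Basis"
  then obtain k where k: "j = axis k 1" by (auto simp: Basis_vec_def)
  have "(\<lambda>x. (\<chi> i. f i x) \<bullet> j) = f k" by (auto simp: k inner_axis)
  then show "(\<lambda>x. (\<chi> i. f i x) \<bullet> j) \<in> borel_measurable M" using assms by simp
qed

lemma lossf_meas [measurable]: "lossf \<in> borel_measurable borel"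
  unfolding lossf_def by measurable

lemma lossf_meas_comp [measurable]:
  "f \<in> borel_measurable M \<Longrightarrow> (\<lambda>x. lossf (f x)) \<in> borel_measurable M"
  using measurable_compose[OF _ lossf_meas] by blast

definition pvec :: "'w measure \<Rightarrow> 'w measure \<Rightarrow> ('w \<Rightarrow> 'm::finite) \<Rightarrow> 'w \<Rightarrow> real^'m" where
  "pvec M H Y \<omega> = (\<chi> y. enn2real (nn_cond_exp M H (indicator (Y -` {y} \<inter> space M)) \<omega>))"

lemma pvec_meas [measurable]: "pvec M H Y \<in> borel_measurable H"
  unfolding pvec_def by measurable

lemma sfs_of_prob:
  assumes "prob_space M" "subalgebra M H"
  shows "sigma_finite_subalgebra M H"
proof -
  interpret prob_space M by fact
  have "finite_measure_subalgebra M H"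
    by (unfold_locales) (rule assms(2))
  then show ?thesis by (rule finite_measure_subalgebra_is_sigma_finite)
qed

context
  fixes M H :: "'w measure" and Y :: "'w \<Rightarrow> 'm::finite"
  assumes P: "prob_space M" and Ymeas: "Y \<in> M \<rightarrow>\<^sub>M count_space UNIV" and sub: "subalgebra M H"
begin

interpretation prob_space M by (rule P)
interpretation sigma_finite_subalgebra M H by (rule sfs_of_prob[OF P sub])

lemma ind_meas [measurable]: "indicator (Y -` A \<inter> space M) \<in> borel_measurable M"
proof -
  have "Y -` A \<inter> space M \<in> sets M" using Ymeas by (rule measurable_sets) simp
  then show ?thesis by simp
qed

lemma nn_cond_exp_finsum:
  assumes "finite I" "\<And>i. i \<in> I \<Longrightarrow> f i \<in> borel_measurable M"
  shows "AE x in M. nn_cond_exp M H (\<lambda>x. \<Sum>i\<in>I. f i x) x = (\<Sum>i\<in>I. nn_cond_exp M H (f i) x)"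
  using assms
proof (induction I rule: finite_induct)
  case empty
  have "AE x in M. (\<lambda>x. 0::ennreal) x = nn_cond_exp M H (\<lambda>x. 0) x"
    by (rule nn_cond_exp_F_meas) simp
  then show ?case by auto
next
  case (insert i I)
  have m1: "f i \<in> borel_measurable M" using insert by simp
  have m2: "(\<lambda>x. \<Sum>j\<in>I. f j x) \<in> borel_measurable M" using insert by (intro borel_measurable_sum) auto
  have "AE x in M. nn_cond_exp M H (f i) x + nn_cond_exp M H (\<lambda>x. \<Sum>j\<in>I. f j x) x
      = nn_cond_exp M H (\<lambda>x. f i x + (\<Sum>j\<in>I. f j x)) x"
    by (rule nn_cond_exp_sum[OF m1 m2])
  moreover have "AE x in M. nn_cond_exp M H (\<lambda>x. \<Sum>j\<in>I. f j x) x = (\<Sum>j\<in>I. nn_cond_exp M H (f j) x)"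
    using insert by auto
  ultimately show ?case using insert by auto
qed

lemma ind_sum_1: "\<omega> \<in> space M \<Longrightarrow> (\<Sum>y\<in>UNIV. indicator (Y -` {y} \<inter> space M) \<omega>) = (1::ennreal)"
  by (simp add: indicator_def)

lemma pvec_ae:
  "AE \<omega> in M. (\<forall>y. nn_cond_exp M H (indicator (Y -` {y} \<inter> space M)) \<omega> = ennreal (pvec M H Y \<omega> $ y))
      \<and> pvec M H Y \<omega> \<in> prob_simplex"
proof -
  let ?P = "\<lambda>y. nn_cond_exp M H (indicator (Y -` {y} \<inter> space M))"
  have a1: "AE x in M. nn_cond_exp M H (\<lambda>x. \<Sum>y\<in>UNIV. indicator (Y -` {y} \<inter> space M) x) x = (\<Sum>y\<in>UNIV. ?P y x)"
    by (rule nn_cond_exp_finsum) auto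
  have a2: "AE x in M. nn_cond_exp M H (\<lambda>x. \<Sum>y\<in>UNIV. indicator (Y -` {y} \<inter> space M) x) x
      = nn_cond_exp M H (\<lambda>x. 1) x"
    by (rule nn_cond_exp_cong) (auto simp: ind_sum_1)
  have a3: "AE x in M. (\<lambda>x. 1::ennreal) x = nn_cond_exp M H (\<lambda>x. 1) x"
    by (rule nn_cond_exp_F_meas) simp
  have s: "AE x in M. (\<Sum>y\<in>UNIV. ?P y x) = 1" using a1 a2 a3 by auto
  then show ?thesis
  proof (rule eventually_mono)
    fix x assume sx: "(\<Sum>y\<in>UNIV. ?P y x) = 1"
    have le: "?P y x \<le> 1" for y
      using sx member_le_sum[of y UNIV "\<lambda>y. ?P y x"] by auto
    then have lt: "?P y x < top" for y using le_less_trans[OF le[of y]] by simp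
    have eq: "?P y x = ennreal (pvec M H Y x $ y)" for y
      unfolding pvec_def using lt[of y] by (simp add: ennreal_enn2real_if less_top)
    have "(\<Sum>y\<in>UNIV. pvec M H Y x $ y) = enn2real (\<Sum>y\<in>UNIV. ?P y x)"
      using lt by (simp add: enn2real_sum pvec_def)
    also have "\<dots> = 1" using sx by simp
    finally have "pvec M H Y x \<in> prob_simplex"
      unfolding prob_simplex_def by (simp add: pvec_def)
    then show "(\<forall>y. ?P y x = ennreal (pvec M H Y x $ y)) \<and> pvec M H Y x \<in> prob_simplex"
      using eq by blast
  qed
qed

lemma ce_tower:
  fixes q :: "'w \<Rightarrow> real^'m"
  assumes q: "q \<in> borel_measurable H"
  shows "(\<integral>\<^sup>+ \<omega>. ce_loss (Y \<omega>) (q \<omega>) \<partial>M) = (\<integral>\<^sup>+ \<omega>. CE (pvec M H Y \<omega>) (q \<omega>) \<partial>M)"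
proof -
  let ?I = "\<lambda>y. indicator (Y -` {y} \<inter> space M) :: 'w \<Rightarrow> ennreal"
  have qM[measurable]: "q \<in> borel_measurable M" by (rule measurable_from_subalg[OF sub q])
  have pM[measurable]: "pvec M H Y \<in> borel_measurable M" by (rule measurable_from_subalg[OF sub pvec_meas])
  have "(\<integral>\<^sup>+ \<omega>. ce_loss (Y \<omega>) (q \<omega>) \<partial>M) = (\<integral>\<^sup>+ \<omega>. (\<Sum>y\<in>UNIV. ?I y \<omega> * lossf (q \<omega> $ y)) \<partial>M)"
  proof (rule nn_integral_cong)
    fix \<omega> assume "\<omega> \<in> space M"
    then have "(\<Sum>y\<in>UNIV. ?I y \<omega> * lossf (q \<omega> $ y)) = (\<Sum>y\<in>UNIV. if y = Y \<omega> then lossf (q \<omega> $ y) else 0)"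
      by (intro sum.cong) (auto simp: indicator_def)
    also have "\<dots> = lossf (q \<omega> $ Y \<omega>)" by simp
    finally show "ce_loss (Y \<omega>) (q \<omega>) = (\<Sum>y\<in>UNIV. ?I y \<omega> * lossf (q \<omega> $ y))"
      by (simp add: ce_loss_lossf)
  qed
  also have "\<dots> = (\<Sum>y\<in>UNIV. \<integral>\<^sup>+ \<omega>. ?I y \<omega> * lossf (q \<omega> $ y) \<partial>M)"
    using qM by (intro nn_integral_sum) measurable
  also have "\<dots> = (\<Sum>y\<in>UNIV. \<integral>\<^sup>+ \<omega>. lossf (q \<omega> $ y) * nn_cond_exp M H (?I y) \<omega> \<partial>M)"
  proof (rule sum.cong[OF refl])
    fix y
    have "(\<integral>\<^sup>+ \<omega>. lossf (q \<omega> $ y) * nn_cond_exp M H (?I y) \<omega> \<partial>M) = (\<integral>\<^sup>+ \<omega>. lossf (q \<omega> $ y) * ?I y \<omega> \<partial>M)"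
      by (intro nn_cond_exp_intg ind_meas lossf_meas_comp measurable_vec_nth q)
    then show "(\<integral>\<^sup>+ \<omega>. ?I y \<omega> * lossf (q \<omega> $ y) \<partial>M) = (\<integral>\<^sup>+ \<omega>. lossf (q \<omega> $ y) * nn_cond_exp M H (?I y) \<omega> \<partial>M)"
      by (simp add: mult.commute)
  qed
  also have "\<dots> = (\<Sum>y\<in>UNIV. \<integral>\<^sup>+ \<omega>. ennreal (pvec M H Y \<omega> $ y) * lossf (q \<omega> $ y) \<partial>M)"
  proof (rule sum.cong[OF refl])
    fix y
    show "(\<integral>\<^sup>+ \<omega>. lossf (q \<omega> $ y) * nn_cond_exp M H (?I y) \<omega> \<partial>M) = (\<integral>\<^sup>+ \<omega>. ennreal (pvec M H Y \<omega> $ y) * lossf (q \<omega> $ y) \<partial>M)"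
      by (rule nn_integral_cong_AE) (use pvec_ae in \<open>auto simp: mult.commute\<close>)
  qed
  also have "\<dots> = (\<integral>\<^sup>+ \<omega>. CE (pvec M H Y \<omega>) (q \<omega>) \<partial>M)"
    unfolding CE_def
    by (intro nn_integral_sum[symmetric]) measurable
  finally show ?thesis .
qed

lemma real_cond_exp_ind:
  "AE \<omega> in M. real_cond_exp M H (indicator (Y -` A \<inter> space M)) \<omega> = (\<Sum>y\<in>A. pvec M H Y \<omega> $ y)"
proof -
  let ?I = "\<lambda>y. indicator (Y -` {y} \<inter> space M) :: 'w \<Rightarrow> ennreal"
  have n0: "AE x in M. (\<lambda>x. 0::ennreal) x = nn_cond_exp M H (\<lambda>x. 0) x"
    by (rule nn_cond_exp_F_meas) simp
  have c1: "AE x in M. nn_cond_exp M H (\<lambda>x. ennreal (indicator (Y -` A \<inter> space M) x)) x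
            = nn_cond_exp M H (\<lambda>x. \<Sum>y\<in>A. ?I y x) x"
  proof (rule nn_cond_exp_cong)
    show "(\<lambda>x. ennreal (indicator (Y -` A \<inter> space M) x)) \<in> borel_measurable M"
      using ind_meas[of A] by (simp add: ennreal_indicator)
    show "(\<lambda>x. \<Sum>y\<in>A. ?I y x) \<in> borel_measurable M" by measurable
    show "AE x in M. ennreal (indicator (Y -` A \<inter> space M) x) = (\<Sum>y\<in>A. ?I y x)"
    proof (rule AE_I2)
      fix x assume x: "x \<in> space M"
      have "(\<Sum>y\<in>A. ?I y x) = (\<Sum>y\<in>A. if Y x = y then 1 else 0)"
        using x by (intro sum.cong) (auto simp: indicator_def)
      also have "\<dots> = (if Y x \<in> A then 1 else 0)" by (simp add: sum.delta)
      finally show "ennreal (indicator (Y -` A \<inter> space M) x) = (\<Sum>y\<in>A. ?I y x)"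
        using x by (simp add: indicator_def)
    qed
  qed
  have c2: "AE x in M. nn_cond_exp M H (\<lambda>x. \<Sum>y\<in>A. ?I y x) x = (\<Sum>y\<in>A. nn_cond_exp M H (?I y) x)"
    by (rule nn_cond_exp_finsum) auto
  show ?thesis
    using n0 c1 c2 pvec_ae
  proof (eventually_elim)
    case (elim x)
    have "real_cond_exp M H (indicator (Y -` A \<inter> space M)) x
        = enn2real (\<Sum>y\<in>A. ennreal (pvec M H Y x $ y)) - enn2real (nn_cond_exp M H (\<lambda>x. 0) x)"
      unfolding real_cond_exp_def using elim by (simp add: ennreal_neg)
    also have "\<dots> = (\<Sum>y\<in>A. pvec M H Y x $ y)"
      using elim(1) elim(4) by (simp add: prob_simplex_def sum_nonneg)
    finally show ?case .
  qed
qed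

end

lemma padded_R_space: "padded_R X b d dmax \<omega> \<in> space (Rspace dmax)"
  by (simp add: padded_R_def space_PiM)

lemma padded_R_comp: "i < d \<Longrightarrow> d \<le> dmax \<Longrightarrow> padded_R X b d dmax \<omega> i = b i \<bullet> X \<omega>"
  by (simp add: padded_R_def)

lemma Rspace_ext:
  assumes "r \<in> space (Rspace dmax)" "r' \<in> space (Rspace dmax)" "\<forall>i<dmax. r i = r' i"
  shows "r = r'"
proof (rule PiE_ext[of r "{..<dmax}" "\<lambda>_. UNIV" r'])
  show "r \<in> {..<dmax} \<rightarrow>\<^sub>E UNIV" "r' \<in> {..<dmax} \<rightarrow>\<^sub>E UNIV" using assms(1,2) by (simp_all add: space_PiM)
  fix i assume "i \<in> {..<dmax}" then show "r i = r' i" using assms(3) by simp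
qed

lemma Gall_D:
  assumes "g \<in> Gall dmax"
  shows "g \<in> Rspace dmax \<rightarrow>\<^sub>M borel" "\<forall>r\<in>space (Rspace dmax). g r \<in> prob_simplex"
proof -
  have c: "g \<in> Rspace dmax \<rightarrow>\<^sub>M borel \<and> (\<forall>r\<in>space (Rspace dmax). g r \<in> prob_simplex)"
    using assms unfolding Gall_def by (rule CollectD)
  show "g \<in> Rspace dmax \<rightarrow>\<^sub>M borel" by (rule conjunct1[OF c])
  show "\<forall>r\<in>space (Rspace dmax). g r \<in> prob_simplex" by (rule conjunct2[OF c])
qed

lemma Gall_I:
  assumes "g \<in> Rspace dmax \<rightarrow>\<^sub>M borel" "\<forall>r\<in>space (Rspace dmax). g r \<in> prob_simplex"
  shows "g \<in> Gall dmax"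
  unfolding Gall_def by (rule CollectI, rule conjI, fact, fact)

lemma Gd_D:
  assumes "g \<in> Gd dmax d"
  shows "g \<in> Gall dmax" "\<forall>r\<in>space (Rspace dmax). \<forall>r'\<in>space (Rspace dmax). (\<forall>i<d. r i = r' i) \<longrightarrow> g r = g r'"
proof -
  have c: "g \<in> Gall dmax \<and> (\<forall>r\<in>space (Rspace dmax). \<forall>r'\<in>space (Rspace dmax). (\<forall>i<d. r i = r' i) \<longrightarrow> g r = g r')"
    using assms unfolding Gd_def by (rule CollectD)
  show "g \<in> Gall dmax" by (rule conjunct1[OF c])
  show "\<forall>r\<in>space (Rspace dmax). \<forall>r'\<in>space (Rspace dmax). (\<forall>i<d. r i = r' i) \<longrightarrow> g r = g r'" by (rule conjunct2[OF c])
qed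

lemma Gd_I:
  assumes "g \<in> Gall dmax" "\<forall>r\<in>space (Rspace dmax). \<forall>r'\<in>space (Rspace dmax). (\<forall>i<d. r i = r' i) \<longrightarrow> g r = g r'"
  shows "g \<in> Gd dmax d"
  unfolding Gd_def by (rule CollectI, rule conjI, fact, fact)

lemma Gd_subset:
  assumes dd: "d \<le> dmax" shows "Gd dmax d \<subseteq> Gd dmax dmax"
proof
  fix g assume g: "g \<in> Gd dmax d"
  have "\<forall>r\<in>space (Rspace dmax). \<forall>r'\<in>space (Rspace dmax). (\<forall>i<dmax. r i = r' i) \<longrightarrow> g r = g r'"
  proof (intro ballI impI)
    fix r r' assume r: "r \<in> space (Rspace dmax)" "r' \<in> space (Rspace dmax)" and e: "\<forall>i<dmax. r i = r' i"
    have "\<forall>i<d. r i = r' i" using e dd by simp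
    then show "g r = g r'" using Gd_D(2)[OF g] r by blast
  qed
  then show "g \<in> Gd dmax dmax" using Gd_D(1)[OF g] by (intro Gd_I)
qed

lemma partA:
  fixes Y :: "'w \<Rightarrow> 'm::finite"
  assumes dd: "d \<le> dmax"
  shows "Lrisk M Y (padded_R X b d dmax) dmax d = Lrisk M Y (padded_R X b d dmax) dmax dmax"
proof (rule antisym)
  let ?R = "padded_R X b d dmax"
  show "Lrisk M Y ?R dmax dmax \<le> Lrisk M Y ?R dmax d"
    unfolding Lrisk_def by (rule INF_superset_mono[OF Gd_subset[OF dd]]) simp
  define pad where "pad r = restrict (\<lambda>i. if i < d then r i else (0::real)) {..<dmax}" for r :: "nat \<Rightarrow> real"
  have pad_meas: "pad \<in> Rspace dmax \<rightarrow>\<^sub>M Rspace dmax"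
    unfolding pad_def
  proof (rule measurable_restrict)
    fix i :: nat assume i: "i \<in> {..<dmax}"
    show "(\<lambda>r. if i < d then r i else 0) \<in> Rspace dmax \<rightarrow>\<^sub>M borel"
      using measurable_component_singleton[OF i, of "\<lambda>_. borel"] by (cases "i < d") auto
  qed
  have pad_space: "pad r \<in> space (Rspace dmax)" for r by (simp add: pad_def space_PiM)
  have pad_R: "pad (?R \<omega>) = ?R \<omega>" for \<omega>
    unfolding pad_def padded_R_def by (rule ext) (simp add: restrict_def)
  show "Lrisk M Y ?R dmax d \<le> Lrisk M Y ?R dmax dmax"
    unfolding Lrisk_def
  proof (rule INF_greatest)
    fix g :: "(nat \<Rightarrow> real) \<Rightarrow> real^'m" assume g: "g \<in> Gd dmax dmax"
    then have gm: "g \<in> Rspace dmax \<rightarrow>\<^sub>M borel" and gs: "\<forall>r\<in>space (Rspace dmax). g r \<in> prob_simplex"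
      using Gall_D[OF Gd_D(1)[OF g]] by auto
    have gp_meas: "(\<lambda>r. g (pad r)) \<in> Rspace dmax \<rightarrow>\<^sub>M borel"
      using measurable_comp[OF pad_meas gm] by (simp add: comp_def)
    have gp_all: "(\<lambda>r. g (pad r)) \<in> Gall dmax"
      using gp_meas gs pad_space by (intro Gall_I) auto
    have gp_eq: "g (pad r) = g (pad r')" if "\<forall>i<d. r i = r' i" for r r'
    proof -
      have "pad r = pad r'" unfolding pad_def using that by (intro restrict_ext) simp
      then show ?thesis by simp
    qed
    have "(\<lambda>r. g (pad r)) \<in> Gd dmax d"
      using gp_all gp_eq by (intro Gd_I) auto
    then have "(INF g\<in>Gd dmax d. \<integral>\<^sup>+ \<omega>. ce_loss (Y \<omega>) (g (?R \<omega>)) \<partial>M)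
        \<le> (\<integral>\<^sup>+ \<omega>. ce_loss (Y \<omega>) (g (pad (?R \<omega>))) \<partial>M)"
      by (rule INF_lower)
    also have "\<dots> = (\<integral>\<^sup>+ \<omega>. ce_loss (Y \<omega>) (g (?R \<omega>)) \<partial>M)" by (simp add: pad_R)
    finally show "(INF g\<in>Gd dmax d. \<integral>\<^sup>+ \<omega>. ce_loss (Y \<omega>) (g (?R \<omega>)) \<partial>M)
        \<le> (\<integral>\<^sup>+ \<omega>. ce_loss (Y \<omega>) (g (?R \<omega>)) \<partial>M)" .
  qed
qed

lemma ci_transfer:
  fixes M :: "'w measure" and Y :: "'w \<Rightarrow> 'm::finite" and X :: "'w \<Rightarrow> 'a::euclidean_space"
    and Z1 Z2 :: "'w \<Rightarrow> 'b::euclidean_space"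
  assumes P: "prob_space M" and Ym: "Y \<in> M \<rightarrow>\<^sub>M count_space UNIV" and Xm: "X \<in> borel_measurable M"
    and subF: "subalgebra M (vimage_algebra (space M) Z1 borel)"
    and subG: "subalgebra M (vimage_algebra (space M) Z2 borel)"
    and subGF: "subalgebra (vimage_algebra (space M) Z1 borel) (vimage_algebra (space M) Z2 borel)"
    and K: "AE \<omega> in M. pvec M (vimage_algebra (space M) Z1 borel) Y \<omega> = pvec M (vimage_algebra (space M) Z2 borel) Y \<omega>"
    and ci: "cond_indep M (count_space UNIV) Y borel X borel Z1"
  shows "cond_indep M (count_space UNIV) Y borel X borel Z2"
  unfolding cond_indep_def
proof (intro ballI)
  define F where "F = vimage_algebra (space M) Z1 borel"
  define G where "G = vimage_algebra (space M) Z2 borel"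
  interpret prob_space M by (rule P)
  interpret F: sigma_finite_subalgebra M F unfolding F_def by (rule sfs_of_prob[OF P subF])
  interpret G: sigma_finite_subalgebra M G unfolding G_def by (rule sfs_of_prob[OF P subG])
  have subF': "subalgebra M F" and subGF': "subalgebra F G" using subF subGF by (simp_all add: F_def G_def)
  fix A :: "'m set" and B :: "'a set" assume A: "A \<in> sets (count_space UNIV)" and B: "B \<in> sets (borel :: 'a measure)"
  define a where "a = (indicator (Y -` A \<inter> space M) :: 'w \<Rightarrow> real)"
  define c where "c = (indicator (X -` B \<inter> space M) :: 'w \<Rightarrow> real)"
  define ac where "ac = (indicator (Y -` A \<inter> X -` B \<inter> space M) :: 'w \<Rightarrow> real)"
  have YA: "Y -` A \<inter> space M \<in> sets M" using Ym by (rule measurable_sets) simp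
  have XB: "X -` B \<inter> space M \<in> sets M" using Xm B by (rule measurable_sets)
  have YXAB: "Y -` A \<inter> X -` B \<inter> space M \<in> sets M"
  proof -
    have "Y -` A \<inter> X -` B \<inter> space M = (Y -` A \<inter> space M) \<inter> (X -` B \<inter> space M)" by auto
    then show ?thesis using YA XB by auto
  qed
  have am[measurable]: "a \<in> borel_measurable M" unfolding a_def using YA by simp
  have cm[measurable]: "c \<in> borel_measurable M" unfolding c_def using XB by simp
  have acm[measurable]: "ac \<in> borel_measurable M" unfolding ac_def using YXAB by simp
  have ai: "integrable M a" unfolding a_def using YA by (simp add: integrable_indicator_iff less_top[symmetric])
  have ci': "integrable M c" unfolding c_def using XB by (simp add: integrable_indicator_iff less_top[symmetric])
  have aci: "integrable M ac" unfolding ac_def using YXAB by (simp add: integrable_indicator_iff less_top[symmetric])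
  have hyp: "AE \<omega> in M. real_cond_exp M F ac \<omega> = real_cond_exp M F a \<omega> * real_cond_exp M F c \<omega>"
    using ci A B unfolding cond_indep_def F_def a_def c_def ac_def by blast
  have KA: "AE \<omega> in M. real_cond_exp M F a \<omega> = real_cond_exp M G a \<omega>"
  proof -
    have e1: "AE \<omega> in M. real_cond_exp M F a \<omega> = (\<Sum>y\<in>A. pvec M F Y \<omega> $ y)"
      unfolding a_def by (rule real_cond_exp_ind[OF P Ym subF'])
    have e2: "AE \<omega> in M. real_cond_exp M G a \<omega> = (\<Sum>y\<in>A. pvec M G Y \<omega> $ y)"
      unfolding a_def by (rule real_cond_exp_ind[OF P Ym subG[folded G_def]])
    show ?thesis using e1 e2 K[folded F_def G_def] by eventually_elim simp
  qed
  have e1: "AE \<omega> in M. real_cond_exp M G (real_cond_exp M F ac) \<omega> = real_cond_exp M G ac \<omega>"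
    by (rule G.real_cond_exp_nested_subalg[OF subF' subGF' aci])
  have e2: "AE \<omega> in M. real_cond_exp M F ac \<omega> = real_cond_exp M G a \<omega> * real_cond_exp M F c \<omega>"
    using hyp KA by eventually_elim simp
  have e3: "AE \<omega> in M. real_cond_exp M G (real_cond_exp M F ac) \<omega>
      = real_cond_exp M G (\<lambda>\<omega>. real_cond_exp M G a \<omega> * real_cond_exp M F c \<omega>) \<omega>"
    by (rule G.real_cond_exp_cong[OF e2]) measurable
  have int_prod: "integrable M (\<lambda>\<omega>. real_cond_exp M G a \<omega> * real_cond_exp M F c \<omega>)"
  proof -
    have "integrable M (real_cond_exp M F ac)" by (rule F.real_cond_exp_int(1)[OF aci])
    moreover have "integrable M (real_cond_exp M F ac) = integrable M (\<lambda>\<omega>. real_cond_exp M G a \<omega> * real_cond_exp M F c \<omega>)"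
      by (rule integrable_cong_AE) (use e2 in \<open>measurable\<close>)
    ultimately show ?thesis by simp
  qed
  have e4: "AE \<omega> in M. real_cond_exp M G (\<lambda>\<omega>. real_cond_exp M G a \<omega> * real_cond_exp M F c \<omega>) \<omega>
      = real_cond_exp M G a \<omega> * real_cond_exp M G (real_cond_exp M F c) \<omega>"
    by (rule G.real_cond_exp_mult) (use int_prod in measurable)
  have e5: "AE \<omega> in M. real_cond_exp M G (real_cond_exp M F c) \<omega> = real_cond_exp M G c \<omega>"
    by (rule G.real_cond_exp_nested_subalg[OF subF' subGF' ci'])
  have "AE \<omega> in M. real_cond_exp M G ac \<omega> = real_cond_exp M G a \<omega> * real_cond_exp M G c \<omega>"
    using e1 e3 e4 e5 by eventually_elim simp
  then show "AE \<omega> in M. real_cond_exp M (vimage_algebra (space M) Z2 borel) (indicator (Y -` A \<inter> X -` B \<inter> space M)) \<omega> =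
        real_cond_exp M (vimage_algebra (space M) Z2 borel) (indicator (Y -` A \<inter> space M)) \<omega> *
        real_cond_exp M (vimage_algebra (space M) Z2 borel) (indicator (X -` B \<inter> space M)) \<omega>"
    unfolding G_def a_def c_def ac_def .
qed

lemma closed_prob_simplex: "closed (prob_simplex :: (real^'m::finite) set)"
proof -
  have e: "prob_simplex = {x::real^'m. \<forall>i. 0 \<le> x$i} \<inter> {x. (\<Sum>i\<in>UNIV. x$i) = 1}"
    unfolding prob_simplex_def by auto
  have c: "closed {x::real^'m. (\<Sum>i\<in>UNIV. x$i) = 1}"
    by (intro closed_Collect_eq continuous_intros)
  have "closed ({x::real^'m. \<forall>i. 0 \<le> x$i} \<inter> {x. (\<Sum>i\<in>UNIV. x$i) = 1})"
    by (rule closed_Int[OF closed_positive_orthant c])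
  then show ?thesis unfolding e .
qed

lemma prob_simplex_borel: "(prob_simplex :: (real^'m::finite) set) \<in> sets borel"
  using closed_prob_simplex by (rule borel_closed)

lemma unif_simplex: "(\<chi> y::'m::finite. 1 / real CARD('m)) \<in> prob_simplex"
  unfolding prob_simplex_def by simp

lemma CE_meas [measurable]:
  fixes f g :: "'w \<Rightarrow> real^'m::finite"
  assumes [measurable]: "f \<in> borel_measurable M" "g \<in> borel_measurable M"
  shows "(\<lambda>\<omega>. CE (f \<omega>) (g \<omega>)) \<in> borel_measurable M"
  unfolding CE_def by measurable

lemma bayes_upper:
  fixes M :: "'w measure" and X :: "'w \<Rightarrow> 'a::euclidean_space" and Y :: "'w \<Rightarrow> 'm::finite"
    and b :: "nat \<Rightarrow> 'a" and C :: "'a set"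
  assumes P: "prob_space M" and Xm: "X \<in> borel_measurable M" and Ym: "Y \<in> M \<rightarrow>\<^sub>M count_space UNIV"
    and C: "subspace C" and sp: "span (b ` {..<d}) = C" and inj: "inj_on b {..<d}" and dd: "d \<le> dmax"
    and subF: "subalgebra M (vimage_algebra (space M) (\<lambda>\<omega>. orth_proj C (X \<omega>)) borel)"
  shows "Lrisk M Y (padded_R X b d dmax) dmax dmax
     \<le> (\<integral>\<^sup>+ \<omega>. CE (pvec M (vimage_algebra (space M) (\<lambda>\<omega>. orth_proj C (X \<omega>)) borel) Y \<omega>)
                    (pvec M (vimage_algebra (space M) (\<lambda>\<omega>. orth_proj C (X \<omega>)) borel) Y \<omega>) \<partial>M)"
proof -
  define T where "T = (\<lambda>\<omega>. orth_proj C (X \<omega>))"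
  define F where "F = vimage_algebra (space M) T borel"
  define R where "R = padded_R X b d dmax"
  have subF': "subalgebra M F" using subF by (simp add: F_def T_def)
  let ?I = "\<lambda>y. indicator (Y -` {y} \<inter> space M) :: 'w \<Rightarrow> ennreal"
  have "\<forall>y. \<exists>\<psi>. \<psi> \<in> borel_measurable borel \<and> (\<forall>\<omega>\<in>space M. nn_cond_exp M F (?I y) \<omega> = \<psi> (T \<omega>))"
  proof
    fix y
    have "nn_cond_exp M F (?I y) \<in> borel_measurable (vimage_algebra (space M) T borel)"
      using borel_measurable_nn_cond_exp[of M F "?I y"] by (simp add: F_def)
    from doob_dynkin_ennreal[OF this] show "\<exists>\<psi>. \<psi> \<in> borel_measurable borel \<and> (\<forall>\<omega>\<in>space M. nn_cond_exp M F (?I y) \<omega> = \<psi> (T \<omega>))"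
      by auto
  qed
  then obtain \<psi> where \<psi>m: "\<And>y. \<psi> y \<in> borel_measurable borel"
    and \<psi>e: "\<And>y \<omega>. \<omega> \<in> space M \<Longrightarrow> nn_cond_exp M F (?I y) \<omega> = \<psi> y (T \<omega>)"
    by metis
  obtain L where Lm: "L \<in> borel_measurable (Rspace dmax)"
    and Le: "\<And>x r. (\<forall>i<d. r i = b i \<bullet> x) \<Longrightarrow> L r = orth_proj C x"
    using proj_factor[OF C sp inj dd] by blast
  define vF where "vF r = (\<chi> y. enn2real (\<psi> y (L r)))" for r
  define unif where "unif = (\<chi> y::'m. 1 / real CARD('m))"
  define gF where "gF r = (if r \<in> vF -` prob_simplex then vF r else unif)" for r
  have vFm: "vF \<in> borel_measurable (Rspace dmax)"
    unfolding vF_def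
  proof (rule measurable_vec_lambda)
    fix y
    have "(\<lambda>r. \<psi> y (L r)) \<in> borel_measurable (Rspace dmax)"
      using measurable_comp[OF Lm \<psi>m[of y]] by (simp add: comp_def)
    then show "(\<lambda>r. enn2real (\<psi> y (L r))) \<in> borel_measurable (Rspace dmax)" by measurable
  qed
  have gFm: "gF \<in> Rspace dmax \<rightarrow>\<^sub>M borel"
    unfolding gF_def
  proof (rule measurable_If_set)
    show "vF \<in> borel_measurable (Rspace dmax)" by (rule vFm)
    show "(\<lambda>r. unif) \<in> borel_measurable (Rspace dmax)" by simp
    show "vF -` prob_simplex \<inter> space (Rspace dmax) \<in> sets (Rspace dmax)"
      using vFm prob_simplex_borel by (rule measurable_sets)
  qed
  have gFs: "\<forall>r\<in>space (Rspace dmax). gF r \<in> prob_simplex"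
    unfolding gF_def unif_def using unif_simplex by auto
  have gFd: "gF \<in> Gd dmax dmax"
  proof (rule Gd_I)
    show "gF \<in> Gall dmax" using gFm gFs by (rule Gall_I)
    show "\<forall>r\<in>space (Rspace dmax). \<forall>r'\<in>space (Rspace dmax). (\<forall>i<dmax. r i = r' i) \<longrightarrow> gF r = gF r'"
    proof (intro ballI impI)
      fix r r' assume "r \<in> space (Rspace dmax)" "r' \<in> space (Rspace dmax)" "\<forall>i<dmax. r i = r' i"
      then have "r = r'" by (rule Rspace_ext)
      then show "gF r = gF r'" by simp
    qed
  qed
  have "Lrisk M Y R dmax dmax \<le> (\<integral>\<^sup>+ \<omega>. ce_loss (Y \<omega>) (gF (R \<omega>)) \<partial>M)"
    unfolding Lrisk_def using gFd by (rule INF_lower)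
  also have "\<dots> = (\<integral>\<^sup>+ \<omega>. ce_loss (Y \<omega>) (pvec M F Y \<omega>) \<partial>M)"
  proof (rule nn_integral_cong_AE)
    have "AE \<omega> in M. \<omega> \<in> space M" by simp
    then show "AE \<omega> in M. ce_loss (Y \<omega>) (gF (R \<omega>)) = ce_loss (Y \<omega>) (pvec M F Y \<omega>)"
      using pvec_ae[OF P Ym subF']
    proof eventually_elim
      case (elim \<omega>)
      have "L (R \<omega>) = T \<omega>" unfolding T_def R_def by (rule Le) (simp add: padded_R_comp dd)
      then have "vF (R \<omega>) = pvec M F Y \<omega>"
        unfolding vF_def pvec_def using \<psi>e[OF elim(1)] by (simp add: vec_eq_iff)
      then have "gF (R \<omega>) = pvec M F Y \<omega>" unfolding gF_def using elim(2) by simp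
      then show ?case by simp
    qed
  qed
  also have "\<dots> = (\<integral>\<^sup>+ \<omega>. CE (pvec M F Y \<omega>) (pvec M F Y \<omega>) \<partial>M)"
    by (rule ce_tower[OF P Ym subF' pvec_meas])
  finally show ?thesis by (simp add: F_def T_def R_def)
qed

lemma lower_G:
  fixes M :: "'w measure" and X :: "'w \<Rightarrow> 'a::euclidean_space" and Y :: "'w \<Rightarrow> 'm::finite"
    and b :: "nat \<Rightarrow> 'a"
  assumes P: "prob_space M" and Xm: "X \<in> borel_measurable M" and Ym: "Y \<in> M \<rightarrow>\<^sub>M count_space UNIV"
    and dd': "d' < d" and dd: "d \<le> dmax"
    and subG: "subalgebra M (vimage_algebra (space M) (\<lambda>\<omega>. orth_proj (span (b ` {..<d'})) (X \<omega>)) borel)"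
  shows "(\<integral>\<^sup>+ \<omega>. CE (pvec M (vimage_algebra (space M) (\<lambda>\<omega>. orth_proj (span (b ` {..<d'})) (X \<omega>)) borel) Y \<omega>)
                    (pvec M (vimage_algebra (space M) (\<lambda>\<omega>. orth_proj (span (b ` {..<d'})) (X \<omega>)) borel) Y \<omega>) \<partial>M)
       \<le> Lrisk M Y (padded_R X b d dmax) dmax d'"
proof -
  define S where "S = span (b ` {..<d'})"
  define T where "T = (\<lambda>\<omega>. orth_proj S (X \<omega>))"
  define G where "G = vimage_algebra (space M) T borel"
  define R where "R = padded_R X b d dmax"
  have S: "subspace S" unfolding S_def by simp
  have subG': "subalgebra M G" using subG by (simp add: G_def T_def S_def)
  have "(\<integral>\<^sup>+ \<omega>. CE (pvec M G Y \<omega>) (pvec M G Y \<omega>) \<partial>M) \<le> Lrisk M Y R dmax d'"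
    unfolding Lrisk_def
  proof (rule INF_greatest)
    fix g :: "(nat \<Rightarrow> real) \<Rightarrow> real^'m" assume g: "g \<in> Gd dmax d'"
    have gm: "g \<in> Rspace dmax \<rightarrow>\<^sub>M borel" and gs: "\<forall>r\<in>space (Rspace dmax). g r \<in> prob_simplex"
      using Gall_D[OF Gd_D(1)[OF g]] by auto
    have geq: "\<forall>r\<in>space (Rspace dmax). \<forall>r'\<in>space (Rspace dmax). (\<forall>i<d'. r i = r' i) \<longrightarrow> g r = g r'"
      by (rule Gd_D(2)[OF g])
    define rr where "rr v = restrict (\<lambda>i. if i < d' then b i \<bullet> v else 0) {..<dmax}" for v :: 'a
    have rrm: "rr \<in> borel \<rightarrow>\<^sub>M Rspace dmax"
      unfolding rr_def
    proof (rule measurable_restrict)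
      fix i :: nat assume "i \<in> {..<dmax}"
      show "(\<lambda>v::'a. if i < d' then b i \<bullet> v else 0) \<in> borel \<rightarrow>\<^sub>M borel" by measurable
    qed
    have rrs: "rr v \<in> space (Rspace dmax)" for v by (simp add: rr_def space_PiM)
    define \<phi> where "\<phi> v = g (rr v)" for v
    have \<phi>m: "\<phi> \<in> borel_measurable borel"
      unfolding \<phi>_def using measurable_comp[OF rrm gm] by (simp add: comp_def)
    have qe: "g (R \<omega>) = \<phi> (T \<omega>)" if \<omega>: "\<omega> \<in> space M" for \<omega>
    proof -
      have "\<forall>i<d'. R \<omega> i = rr (T \<omega>) i"
      proof (intro allI impI)
        fix i assume i: "i < d'"
        then have "b i \<in> S" unfolding S_def by (intro span_base) auto
        then have "b i \<bullet> T \<omega> = b i \<bullet> X \<omega>" unfolding T_def by (rule orth_proj_inner[OF S])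
        moreover have "R \<omega> i = b i \<bullet> X \<omega>" unfolding R_def using i dd' dd by (intro padded_R_comp) auto
        moreover have "rr (T \<omega>) i = b i \<bullet> T \<omega>" unfolding rr_def using i dd' dd by auto
        ultimately show "R \<omega> i = rr (T \<omega>) i" by simp
      qed
      then have pr: "\<And>i. i < d' \<Longrightarrow> padded_R X b d dmax \<omega> i = rr (T \<omega>) i" unfolding R_def by blast
      show ?thesis unfolding \<phi>_def R_def by (rule geq[rule_format, OF padded_R_space rrs pr])
    qed
    have qG: "(\<lambda>\<omega>. g (R \<omega>)) \<in> borel_measurable G"
    proof -
      have "(\<lambda>\<omega>. \<phi> (T \<omega>)) \<in> borel_measurable G"
        unfolding G_def using measurable_comp[OF measurable_vimage_algebra1 \<phi>m, of T "space M"]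
        by (simp add: comp_def)
      moreover have "(\<lambda>\<omega>. g (R \<omega>)) \<in> borel_measurable G \<longleftrightarrow> (\<lambda>\<omega>. \<phi> (T \<omega>)) \<in> borel_measurable G"
        by (rule measurable_cong) (simp add: G_def qe)
      ultimately show ?thesis by simp
    qed
    have "(\<integral>\<^sup>+ \<omega>. CE (pvec M G Y \<omega>) (pvec M G Y \<omega>) \<partial>M) \<le> (\<integral>\<^sup>+ \<omega>. CE (pvec M G Y \<omega>) (g (R \<omega>)) \<partial>M)"
    proof (rule nn_integral_mono_AE)
      have "AE \<omega> in M. \<omega> \<in> space M" by simp
      then show "AE \<omega> in M. CE (pvec M G Y \<omega>) (pvec M G Y \<omega>) \<le> CE (pvec M G Y \<omega>) (g (R \<omega>))"
        using pvec_ae[OF P Ym subG']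
      proof eventually_elim
        case (elim \<omega>)
        have "g (R \<omega>) \<in> prob_simplex" unfolding R_def by (rule gs[rule_format, OF padded_R_space])
        then show ?case using elim(2) by (intro CE_G1) auto
      qed
    qed
    also have "\<dots> = (\<integral>\<^sup>+ \<omega>. ce_loss (Y \<omega>) (g (R \<omega>)) \<partial>M)"
      by (rule ce_tower[OF P Ym subG' qG, symmetric])
    finally show "(\<integral>\<^sup>+ \<omega>. CE (pvec M G Y \<omega>) (pvec M G Y \<omega>) \<partial>M) \<le> (\<integral>\<^sup>+ \<omega>. ce_loss (Y \<omega>) (g (R \<omega>)) \<partial>M)" .
  qed
  then show ?thesis by (simp add: G_def T_def S_def R_def)
qed

lemma main_general:
  fixes M :: "'w measure" and X :: "'w \<Rightarrow> 'a::euclidean_space" and Y :: "'w \<Rightarrow> 'm::finite"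
    and b :: "nat \<Rightarrow> 'a" and dmax :: nat and C :: "'a set"
  assumes Ceq: "C = central_subspace M X Y"
    and P: "prob_space M"
    and Xm: "X \<in> borel_measurable M"
    and Ym: "Y \<in> M \<rightarrow>\<^sub>M count_space UNIV"
    and drC: "is_dr_subspace M X Y C"
    and inj: "inj_on b {..<dim C}"
    and indep: "independent (b ` {..<dim C})"
    and sp: "span (b ` {..<dim C}) = C"
    and dd: "dim C \<le> dmax"
  shows "d_star M Y (padded_R X b (dim C) dmax) dmax = dim C"
proof -
  interpret prob_space M by (rule P)
  have Csub: "subspace C" using drC by (simp add: is_dr_subspace_def)
  have ciC: "cond_indep M (count_space UNIV) Y borel X borel (\<lambda>\<omega>. orth_proj C (X \<omega>))"
    using drC by (simp add: is_dr_subspace_def)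
  let ?d = "dim C"
  let ?R = "padded_R X b ?d dmax"
  have A: "Lrisk M Y ?R dmax ?d = Lrisk M Y ?R dmax dmax" by (rule partA[OF dd])
  have B: "Lrisk M Y ?R dmax d' \<noteq> Lrisk M Y ?R dmax dmax" if d': "d' < ?d" for d'
  proof
    assume eqL: "Lrisk M Y ?R dmax d' = Lrisk M Y ?R dmax dmax"
    let ?S = "span (b ` {..<d'})"
    have S: "subspace ?S" by simp
    have SC: "?S \<subseteq> C"
    proof -
      have "?S \<subseteq> span (b ` {..<?d})" using d' by (intro span_mono) auto
      then show ?thesis using sp by simp
    qed
    let ?TC = "\<lambda>\<omega>. orth_proj C (X \<omega>)"
    let ?TS = "\<lambda>\<omega>. orth_proj ?S (X \<omega>)"
    let ?F = "vimage_algebra (space M) ?TC borel"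
    let ?G = "vimage_algebra (space M) ?TS borel"
    have TCm: "?TC \<in> borel_measurable M"
      using measurable_comp[OF Xm orth_proj_meas[OF Csub]] by (simp add: comp_def)
    have TSm: "?TS \<in> borel_measurable M"
      using measurable_comp[OF Xm orth_proj_meas[OF S]] by (simp add: comp_def)
    have subF: "subalgebra M ?F"
      unfolding subalgebra_def using sets_image_in_sets[OF refl TCm] by simp
    have subG: "subalgebra M ?G"
      unfolding subalgebra_def using sets_image_in_sets[OF refl TSm] by simp
    have subGF: "subalgebra ?F ?G"
    proof -
      have eqT: "?TS = (\<lambda>\<omega>. orth_proj ?S (?TC \<omega>))"
        by (rule ext) (simp add: orth_proj_nested[OF S Csub SC])
      have "(\<lambda>\<omega>. orth_proj ?S (?TC \<omega>)) \<in> borel_measurable ?F"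
        using measurable_comp[OF measurable_vimage_algebra1 orth_proj_meas[OF S], of ?TC "space M"]
        by (simp add: comp_def)
      then have "?TS \<in> borel_measurable ?F" using eqT by simp
      then have "sets ?G \<subseteq> sets ?F" by (intro sets_image_in_sets) simp_all
      then show ?thesis unfolding subalgebra_def by simp
    qed
    let ?pF = "pvec M ?F Y"
    let ?pG = "pvec M ?G Y"
    have pFm[measurable]: "?pF \<in> borel_measurable M" by (rule measurable_from_subalg[OF subF pvec_meas])
    have pGm[measurable]: "?pG \<in> borel_measurable M" by (rule measurable_from_subalg[OF subG pvec_meas])
    have pGF: "?pG \<in> borel_measurable ?F" by (rule measurable_from_subalg[OF subGF pvec_meas])
    have up: "Lrisk M Y ?R dmax dmax \<le> (\<integral>\<^sup>+ \<omega>. CE (?pF \<omega>) (?pF \<omega>) \<partial>M)"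
      by (rule bayes_upper[OF P Xm Ym Csub sp inj dd subF])
    have low: "(\<integral>\<^sup>+ \<omega>. CE (?pG \<omega>) (?pG \<omega>) \<partial>M) \<le> Lrisk M Y ?R dmax d'"
      by (rule lower_G[OF P Xm Ym d' dd subG])
    have t1: "(\<integral>\<^sup>+ \<omega>. ce_loss (Y \<omega>) (?pG \<omega>) \<partial>M) = (\<integral>\<^sup>+ \<omega>. CE (?pF \<omega>) (?pG \<omega>) \<partial>M)"
      by (rule ce_tower[OF P Ym subF pGF])
    have t2: "(\<integral>\<^sup>+ \<omega>. ce_loss (Y \<omega>) (?pG \<omega>) \<partial>M) = (\<integral>\<^sup>+ \<omega>. CE (?pG \<omega>) (?pG \<omega>) \<partial>M)"
      by (rule ce_tower[OF P Ym subG pvec_meas])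
    have aeF: "AE \<omega> in M. (\<forall>y. nn_cond_exp M ?F (indicator (Y -` {y} \<inter> space M)) \<omega> = ennreal (?pF \<omega> $ y)) \<and> ?pF \<omega> \<in> prob_simplex"
      by (rule pvec_ae[OF P Ym subF])
    have aeG: "AE \<omega> in M. (\<forall>y. nn_cond_exp M ?G (indicator (Y -` {y} \<inter> space M)) \<omega> = ennreal (?pG \<omega> $ y)) \<and> ?pG \<omega> \<in> prob_simplex"
      by (rule pvec_ae[OF P Ym subG])
    have aele: "AE \<omega> in M. CE (?pF \<omega>) (?pF \<omega>) \<le> CE (?pF \<omega>) (?pG \<omega>)"
      using aeF aeG by eventually_elim (intro CE_G1, auto)
    have le: "(\<integral>\<^sup>+ \<omega>. CE (?pF \<omega>) (?pF \<omega>) \<partial>M) \<le> (\<integral>\<^sup>+ \<omega>. CE (?pF \<omega>) (?pG \<omega>) \<partial>M)"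
      using aele by (rule nn_integral_mono_AE)
    have fin: "(\<integral>\<^sup>+ \<omega>. CE (?pF \<omega>) (?pF \<omega>) \<partial>M) \<noteq> \<infinity>"
    proof -
      have "AE \<omega> in M. CE (?pF \<omega>) (?pF \<omega>) \<le> of_nat CARD('m)"
        using aeF by eventually_elim (rule CE_bound, blast)
      then have "(\<integral>\<^sup>+ \<omega>. CE (?pF \<omega>) (?pF \<omega>) \<partial>M) \<le> (\<integral>\<^sup>+ \<omega>. of_nat CARD('m) \<partial>M)"
        by (rule nn_integral_mono_AE)
      also have "\<dots> = of_nat CARD('m)" by (simp add: emeasure_space_1)
      finally have "(\<integral>\<^sup>+ \<omega>. CE (?pF \<omega>) (?pF \<omega>) \<partial>M) < top"
        using of_nat_less_top[of "CARD('m)"] by (rule le_less_trans)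
      then show ?thesis by simp
    qed
    have eqI: "(\<integral>\<^sup>+ \<omega>. CE (?pF \<omega>) (?pG \<omega>) \<partial>M) = (\<integral>\<^sup>+ \<omega>. CE (?pF \<omega>) (?pF \<omega>) \<partial>M)"
    proof (rule antisym[OF _ le])
      have "(\<integral>\<^sup>+ \<omega>. CE (?pF \<omega>) (?pG \<omega>) \<partial>M) = (\<integral>\<^sup>+ \<omega>. CE (?pG \<omega>) (?pG \<omega>) \<partial>M)"
        using t1 t2 by simp
      also have "\<dots> \<le> Lrisk M Y ?R dmax d'" by (rule low)
      also have "\<dots> = Lrisk M Y ?R dmax dmax" by (rule eqL)
      also have "\<dots> \<le> (\<integral>\<^sup>+ \<omega>. CE (?pF \<omega>) (?pF \<omega>) \<partial>M)" by (rule up)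
      finally show "(\<integral>\<^sup>+ \<omega>. CE (?pF \<omega>) (?pG \<omega>) \<partial>M) \<le> (\<integral>\<^sup>+ \<omega>. CE (?pF \<omega>) (?pF \<omega>) \<partial>M)" .
    qed
    have "(\<integral>\<^sup>+ \<omega>. CE (?pF \<omega>) (?pG \<omega>) - CE (?pF \<omega>) (?pF \<omega>) \<partial>M)
        = (\<integral>\<^sup>+ \<omega>. CE (?pF \<omega>) (?pG \<omega>) \<partial>M) - (\<integral>\<^sup>+ \<omega>. CE (?pF \<omega>) (?pF \<omega>) \<partial>M)"
      by (rule nn_integral_diff[OF _ _ fin aele]) measurable
    also have "\<dots> = 0" using eqI fin by simp
    finally have "AE \<omega> in M. CE (?pF \<omega>) (?pG \<omega>) - CE (?pF \<omega>) (?pF \<omega>) = 0"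
      by (subst (asm) nn_integral_0_iff_AE) measurable
    then have K: "AE \<omega> in M. ?pF \<omega> = ?pG \<omega>"
      using aeF aeG
    proof eventually_elim
      case (elim \<omega>)
      then have "CE (?pF \<omega>) (?pG \<omega>) \<le> CE (?pF \<omega>) (?pF \<omega>)" by (simp add: diff_eq_0_iff_ennreal)
      then show ?case using elim by (intro CE_G2) auto
    qed
    have ciS: "cond_indep M (count_space UNIV) Y borel X borel ?TS"
      by (rule ci_transfer[OF P Ym Xm subF subG subGF K ciC])
    have drS: "is_dr_subspace M X Y ?S"
      unfolding is_dr_subspace_def using ciS by simp
    have "C \<subseteq> ?S" unfolding Ceq central_subspace_def using drS by blast
    then have "dim C \<le> dim ?S" by (rule dim_subset)
    also have "dim ?S = dim (b ` {..<d'})" by simp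
    also have "dim (b ` {..<d'}) \<le> card (b ` {..<d'})" by (intro dim_le_card span_superset) auto
    also have "card (b ` {..<d'}) \<le> d'" using card_image_le[of "{..<d'}" b] by simp
    finally show False using d' by simp
  qed
  show ?thesis
    unfolding d_star_def
  proof (rule Least_equality)
    show "?d \<le> dmax \<and> Lrisk M Y ?R dmax ?d = Lrisk M Y ?R dmax dmax" using dd A by simp
    fix d' assume "d' \<le> dmax \<and> Lrisk M Y ?R dmax d' = Lrisk M Y ?R dmax dmax"
    then show "?d \<le> d'" using B by (meson not_le)
  qed
qed

theorem propositionB5:
  fixes M :: "'w measure" and X :: "'w \<Rightarrow> real ^ 'p" and Y :: "'w \<Rightarrow> 'm::finite"
    and b :: "nat \<Rightarrow> real ^ 'p" and dmax :: nat
  assumes "prob_space M"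
    and "X \<in> borel_measurable M"
    and "Y \<in> M \<rightarrow>\<^sub>M count_space UNIV"
    and "is_dr_subspace M X Y (central_subspace M X Y)"
    and "inj_on b {..<dim (central_subspace M X Y)}"
    and "independent (b ` {..<dim (central_subspace M X Y)})"
    and "span (b ` {..<dim (central_subspace M X Y)}) = central_subspace M X Y"
    and "dim (central_subspace M X Y) \<le> dmax"
  shows "d_star M Y (padded_R X b (dim (central_subspace M X Y)) dmax) dmax
           = dim (central_subspace M X Y)"
  by (rule main_general[OF refl assms])

end
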